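(* Let $X$ be a real Banach space, $V$ a closed subset of $X$, $F=\{x_1,\dots,x_N\}$ a finite subset of $X$, and $f:[0,\infty)^N\to[0,\infty)$ a convex monotone function. Then every sequence $(v_n)\subseteq V$ with $r_f(v_n,F)\to\mathrm{rad}_V^f(F)$ is convergent if and only if for every $\varepsilon>0$ there exists $\delta>0$ such that $\mathrm{diam}(\delta\text{-}\mathrm{Cent}_V^f(F))<\varepsilon$.
   Context: $f$ is monotone if $a\le b$ coordinatewise implies $f(a)\le f(b)$. $r_f(x,F)=f(\|x-x_1\|,\dots,\|x-x_N\|)$, $\mathrm{rad}_V^f(F)=\inf_{v\in V}r_f(v,F)$, and $\delta\text{-}\mathrm{Cent}_V^f(F)=\{v\in V:r_f(v,F)\le\mathrm{rad}_V^f(F)+\delta\}$; $\mathrm{diam}$ denotes the diameter of a set. *)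

theory Defs
  imports "HOL-Analysis.Analysis"
begin

text \<open>The finite set F = {x_1,...,x_N} is given by an indexing x :: 'n \<Rightarrow> 'a
  over a finite index type 'n with N = CARD('n); f is defined on [0,\<infinity>)^N,
  modelled as vectors real^'n with nonnegative coordinates.\<close>

definition nonneg_orthant :: "(real^'n) set" where
  "nonneg_orthant = {t. \<forall>i. 0 \<le> t $ i}"

definition monotone_fun :: "(real^'n \<Rightarrow> real) \<Rightarrow> bool" where
  "monotone_fun f \<longleftrightarrow> (\<forall>a\<in>nonneg_orthant. \<forall>b\<in>nonneg_orthant.
      (\<forall>i. a $ i \<le> b $ i) \<longrightarrow> f a \<le> f b)"

definition r_f :: "(real^'n \<Rightarrow> real) \<Rightarrow> ('n::finite \<Rightarrow> 'a::real_normed_vector) \<Rightarrow> 'a \<Rightarrow> real" where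
  "r_f f x p = f (\<chi> i. norm (p - x i))"

definition rad_f :: "(real^'n \<Rightarrow> real) \<Rightarrow> ('n::finite \<Rightarrow> 'a::real_normed_vector) \<Rightarrow> 'a set \<Rightarrow> real" where
  "rad_f f x V = (INF v\<in>V. r_f f x v)"

definition cent_f :: "real \<Rightarrow> (real^'n \<Rightarrow> real) \<Rightarrow> ('n::finite \<Rightarrow> 'a::real_normed_vector) \<Rightarrow> 'a set \<Rightarrow> 'a set" where
  "cent_f \<delta> f x V = {v\<in>V. r_f f x v \<le> rad_f f x V + \<delta>}"

end

theory Submission
  imports Defs
begin

theorem theorem3p10:
  fixes V :: "'a::banach set" and x :: "'n::finite \<Rightarrow> 'a" and f :: "real^'n \<Rightarrow> real"
  assumes "closed V"
    and "\<forall>t\<in>nonneg_orthant. 0 \<le> f t"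
    and "convex_on nonneg_orthant f"
    and "monotone_fun f"
  shows "(\<forall>v :: nat \<Rightarrow> 'a. (\<forall>n. v n \<in> V) \<longrightarrow>
            (\<lambda>n. r_f f x (v n)) \<longlonglongrightarrow> rad_f f x V \<longrightarrow> convergent v)
         \<longleftrightarrow> (\<forall>\<epsilon>>0. \<exists>\<delta>>0. bounded (cent_f \<delta> f x V) \<and> diameter (cent_f \<delta> f x V) < \<epsilon>)"
proof -
  define R where "R = r_f f x"
  define rad where "rad = rad_f f x V"
  have nn: "0 \<le> R p" for p
    using assms(2) unfolding R_def r_f_def nonneg_orthant_def by auto
  have bdd: "bdd_below (R ` V)" using nn by (meson bdd_belowI2)
  have low: "rad \<le> R v" if "v \<in> V" for v
    unfolding rad_def rad_f_def R_def[symmetric] using bdd that by (simp add: cINF_lower)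
  have near: "\<exists>v\<in>V. R v < rad + d" if "V \<noteq> {}" "d > 0" for d
  proof -
    have "Inf (R ` V) < rad + d" using that unfolding rad_def rad_f_def R_def by simp
    then show ?thesis using cInf_lessD[of "R ` V" "rad + d"] that by auto
  qed
  have C: "cent_f d f x V = {v\<in>V. R v \<le> rad + d}" for d
    unfolding cent_f_def R_def rad_def by simp
  show ?thesis
    unfolding R_def[symmetric] rad_def[symmetric] C
  proof
    assume H: "\<forall>v :: nat \<Rightarrow> 'a. (\<forall>n. v n \<in> V) \<longrightarrow> (\<lambda>n. R (v n)) \<longlonglongrightarrow> rad \<longrightarrow> convergent v"
    show "\<forall>\<epsilon>>0. \<exists>\<delta>>0. bounded {v\<in>V. R v \<le> rad + \<delta>} \<and> diameter {v\<in>V. R v \<le> rad + \<delta>} < \<epsilon>"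
    proof (intro allI impI, rule ccontr)
      fix e :: real assume e: "e > 0"
      assume N: "\<not> (\<exists>\<delta>>0. bounded {v\<in>V. R v \<le> rad + \<delta>} \<and> diameter {v\<in>V. R v \<le> rad + \<delta>} < e)"
      have ex: "\<exists>u w. u \<in> V \<and> w \<in> V \<and> R u \<le> rad + 1/(real n+1) \<and> R w \<le> rad + 1/(real n+1) \<and> e/2 < dist u w" for n
      proof -
        define S where "S = {v\<in>V. R v \<le> rad + 1/(real n+1)}"
        have d: "1/(real n+1) > 0" by simp
        have nb: "\<not> (bounded S \<and> diameter S < e)" using N d unfolding S_def by blast
        show ?thesis
        proof (cases "bounded S")
          case True
          then have "e \<le> diameter S" using nb by simp
          then have "e/2 < diameter S" using e by simp
          then obtain u w where "u \<in> S" "w \<in> S" "e/2 < dist u w"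
            using diameter_lower_bounded[OF True, of "e/2"] e by auto
          then show ?thesis unfolding S_def by auto
        next
          case False
          then have "S \<noteq> {}" by auto
          then obtain u where u: "u \<in> S" by auto
          from False have "\<not> (\<forall>w\<in>S. dist u w \<le> e/2)"
            using bounded_def by blast
          then obtain w where "w \<in> S" "e/2 < dist u w" by (auto simp: not_le)
          then show ?thesis using u unfolding S_def by auto
        qed
      qed
      then obtain u w where uw: "\<And>n. u n \<in> V \<and> w n \<in> V \<and> R (u n) \<le> rad + 1/(real n+1) \<and> R (w n) \<le> rad + 1/(real n+1) \<and> e/2 < dist (u n) (w n)"
        by metis
      define s where "s k = (if even k then u (k div 2) else w (k div 2))" for k
      have sV: "\<forall>k. s k \<in> V" using uw unfolding s_def by auto
      have sb: "R (s k) \<le> rad + 1/(real (k div 2)+1)" for k using uw unfolding s_def by auto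
      have lim: "(\<lambda>k. R (s k)) \<longlonglongrightarrow> rad"
      proof (rule LIMSEQ_I)
        fix r :: real assume r: "r > 0"
        obtain M :: nat where M: "1/r < real M" using reals_Archimedean2 by blast
        show "\<exists>no. \<forall>k\<ge>no. norm (R (s k) - rad) < r"
        proof (intro exI allI impI)
          fix k assume k: "2*M \<le> k"
          then have "M \<le> k div 2" by linarith
          then have "real M \<le> real (k div 2)" by simp
          then have "1/r < real (k div 2) + 1" using M by linarith
          then have "1/(real (k div 2)+1) < r" using r
            by (smt (verit) divide_less_eq mult.commute of_nat_0_le_iff pos_divide_less_eq)
          then show "norm (R (s k) - rad) < r" using sb[of k] low[of "s k"] sV by auto
        qed
      qed
      have "convergent s" using H sV lim by blast
      then have "Cauchy s" by (simp add: convergent_Cauchy)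
      then obtain M where M: "\<forall>m\<ge>M. \<forall>n\<ge>M. dist (s m) (s n) < e/2"
        using e metric_CauchyD[of s "e/2"] by auto
      have "dist (s (2*M)) (s (2*M+1)) < e/2" using M by auto
      moreover have "s (2*M) = u M" "s (2*M+1) = w M" unfolding s_def by auto
      ultimately show False using uw[of M] by auto
    qed
  next
    assume H: "\<forall>\<epsilon>>0. \<exists>\<delta>>0. bounded {v\<in>V. R v \<le> rad + \<delta>} \<and> diameter {v\<in>V. R v \<le> rad + \<delta>} < \<epsilon>"
    show "\<forall>v :: nat \<Rightarrow> 'a. (\<forall>n. v n \<in> V) \<longrightarrow> (\<lambda>n. R (v n)) \<longlonglongrightarrow> rad \<longrightarrow> convergent v"
    proof (intro allI impI)
      fix v :: "nat \<Rightarrow> 'a" assume vV: "\<forall>n. v n \<in> V" and lim: "(\<lambda>n. R (v n)) \<longlonglongrightarrow> rad"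
      have "Cauchy v"
      proof (rule metric_CauchyI)
        fix e :: real assume e: "e > 0"
        then obtain d where d: "d > 0" "bounded {v\<in>V. R v \<le> rad + d}" "diameter {v\<in>V. R v \<le> rad + d} < e"
          using H by blast
        obtain M where M: "\<forall>n\<ge>M. norm (R (v n) - rad) < d" using LIMSEQ_D[OF lim d(1)] by blast
        have inC: "v n \<in> {v\<in>V. R v \<le> rad + d}" if "n \<ge> M" for n
          using M that vV by (auto simp: abs_less_iff)
        show "\<exists>M. \<forall>m\<ge>M. \<forall>n\<ge>M. dist (v m) (v n) < e"
          using inC diameter_bounded_bound[OF d(2)] d(3) by (meson le_less_trans)
      qed
      then show "convergent v" by (simp add: Cauchy_convergent_iff)
    qed
  qed
qed

end
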